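(* Let $L=(\ell_1,\dots,\ell_n)$, $K=(k_1,\dots,k_n)\in\mathbb{R}^n$ with $0<k_i<\ell_i$ for all $i$, and let $X=(x_1,\dots,x_n)\in\mathbb{R}^n$. Then $\mathcal{S}_{L,K}\cap(X+\mathcal{S}_{L,K})\neq\varnothing$ if and only if $|x_i|<\ell_i$ for all $1\le i\le n$ and there exist indices $j,r\in\{1,\dots,n\}$ such that $x_j<\ell_j-k_j$ and $-(\ell_r-k_r)<x_r$.
   Context: $\mathcal{S}_{L,K}=\{(y_1,\dots,y_n)\in\mathbb{R}^n: 0\le y_i<\ell_i \text{ for all } i, \text{ and there exists } j \text{ with } y_j<\ell_j-k_j\}$, and $X+\mathcal{S}_{L,K}=\{X+Y: Y\in\mathcal{S}_{L,K}\}$. *)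

theory Defs
  imports "HOL-Analysis.Analysis"
begin

definition S_LK :: "real^'n \<Rightarrow> real^'n \<Rightarrow> (real^'n) set" where
  "S_LK L K = {Y. (\<forall>i. 0 \<le> Y $ i \<and> Y $ i < L $ i) \<and> (\<exists>j. Y $ j < L $ j - K $ j)}"

definition translate :: "real^'n \<Rightarrow> (real^'n) set \<Rightarrow> (real^'n) set" where
  "translate X S = {X + Y | Y. Y \<in> S}"

end

theory Submission
  imports Defs
begin

theorem mainTheorem12:
  fixes L K X :: "real^'n"
  assumes "\<forall>i. 0 < K $ i \<and> K $ i < L $ i"
  shows "S_LK L K \<inter> translate X (S_LK L K) \<noteq> {} \<longleftrightarrow>
           ((\<forall>i. \<bar>X $ i\<bar> < L $ i) \<and>
            (\<exists>j r. X $ j < L $ j - K $ j \<and> - (L $ r - K $ r) < X $ r))"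
proof
  assume "S_LK L K \<inter> translate X (S_LK L K) \<noteq> {}"
  then obtain Z where Z: "Z \<in> S_LK L K" and Y: "X + Z \<in> S_LK L K"
    unfolding translate_def by auto
  from Z obtain r where r: "Z $ r < L $ r - K $ r" and Zb: "\<forall>i. 0 \<le> Z $ i \<and> Z $ i < L $ i"
    unfolding S_LK_def by auto
  from Y obtain j where j: "X $ j + Z $ j < L $ j - K $ j" and Yb: "\<forall>i. 0 \<le> X $ i + Z $ i \<and> X $ i + Z $ i < L $ i"
    unfolding S_LK_def by auto
  have "\<forall>i. \<bar>X $ i\<bar> < L $ i"
  proof
    fix i show "\<bar>X $ i\<bar> < L $ i" using Zb[rule_format, of i] Yb[rule_format, of i] by linarith
  qed
  moreover have "X $ j < L $ j - K $ j" using j Zb[rule_format, of j] by linarith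
  moreover have "- (L $ r - K $ r) < X $ r" using r Yb[rule_format, of r] by linarith
  ultimately show "(\<forall>i. \<bar>X $ i\<bar> < L $ i) \<and>
            (\<exists>j r. X $ j < L $ j - K $ j \<and> - (L $ r - K $ r) < X $ r)" by blast
next
  assume H: "(\<forall>i. \<bar>X $ i\<bar> < L $ i) \<and>
            (\<exists>j r. X $ j < L $ j - K $ j \<and> - (L $ r - K $ r) < X $ r)"
  then obtain j r where j: "X $ j < L $ j - K $ j" and r: "- (L $ r - K $ r) < X $ r" by blast
  have B: "\<And>i. \<bar>X $ i\<bar> < L $ i" using H by blast
  define Z :: "real^'n" where "Z = (\<chi> i. max 0 (- X $ i))"
  have Zi: "\<And>i. Z $ i = max 0 (- X $ i)" unfolding Z_def by simp
  have "Z \<in> S_LK L K"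
    unfolding S_LK_def
  proof (intro CollectI conjI allI exI[of _ r])
    fix i show "0 \<le> Z $ i" using Zi[of i] by simp
    show "Z $ i < L $ i" using Zi[of i] B[of i] by (simp add: abs_if split: if_splits)
  next
    show "Z $ r < L $ r - K $ r" using Zi[of r] r assms by (auto simp: max_def)
  qed
  moreover have "X + Z \<in> S_LK L K"
    unfolding S_LK_def
  proof (intro CollectI conjI allI exI[of _ j])
    fix i show "0 \<le> (X + Z) $ i" using Zi[of i] by simp
    show "(X + Z) $ i < L $ i" using Zi[of i] B[of i] by (simp add: abs_if max_def split: if_splits)
  next
    show "(X + Z) $ j < L $ j - K $ j" using Zi[of j] j assms by (auto simp: max_def)
  qed
  ultimately show "S_LK L K \<inter> translate X (S_LK L K) \<noteq> {}"
    unfolding translate_def by blast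
qed

end
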